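(* Fix $a\in(0,1/2)$ and $b\in(0,1)$. There exist constants $c_1>0$ and $c_2>0$ (independent of $n$) such that for all sufficiently large $n$, the random-neighbor variant process on the complete graph $K_n$ with root $r$ satisfies $\Pr[\tau_{\mathrm{conv}}\ge c_2n]\ge c_1a$.
   Context: Random-neighbor variant. Fix $a,b\in[0,1]$, a connected graph $G=(V,E)$ and a root $r$. Labels $f_t:V\to\{+1,-1,\bot\}$ with $f_t(r)=+1$ for all $t$ and $f_0(v)=\bot$ for $v\ne r$. For $t\ge1$ and each $v\neq r$ independently, let $N_{t-1}(v)=\{u:(u,v)\in E,\ f_{t-1}(u)\ne\bot\}$. If $f_{t-1}(v)=\bot$ and $N_{t-1}(v)=\emptyset$, then $f_t(v)=\bot$. If $f_{t-1}(v)=\bot$ and $N_{t-1}(v)\neq\emptyset$, pick $w$ uniformly from $N_{t-1}(v)$ and set $f_t(v)=f_{t-1}(w)$ w.p. $1-a$ and $-f_{t-1}(w)$ w.p. $a$. If $f_{t-1}(v)\ne\bot$, pick $w$ uniformly at random from $N_{t-1}(v)$ (afresh every round) and set $f_t(v)=f_{t-1}(w)$ w.p. $b$ and $f_t(v)=f_{t-1}(v)$ w.p. $1-b$. The convergence time is $\tau_{\mathrm{conv}}=\min\{t: f_t(v)=+1\ \forall v\in V\}$. *)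

theory Defs
  imports "HOL-Probability.Probability"
begin

datatype label = Pos | Neg | Bot

fun lneg :: "label \<Rightarrow> label" where
  "lneg Pos = Neg" | "lneg Neg = Pos" | "lneg Bot = Bot"

text \<open>Complete graph K_n on vertex set {0..<n}: u, v adjacent iff u \<noteq> v.
  Labelled neighbourhood N_{t-1}(v).\<close>
definition nbrs :: "nat \<Rightarrow> (nat \<Rightarrow> label) \<Rightarrow> nat \<Rightarrow> nat set" where
  "nbrs n f v = {u. u < n \<and> u \<noteq> v \<and> f u \<noteq> Bot}"

definition vupdate :: "real \<Rightarrow> real \<Rightarrow> nat \<Rightarrow> (nat \<Rightarrow> label) \<Rightarrow> nat \<Rightarrow> label pmf" where
  "vupdate a b n f v =
     (if nbrs n f v = {} then return_pmf (f v)
      else if f v = Bot then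
        do { w \<leftarrow> pmf_of_set (nbrs n f v);
             c \<leftarrow> bernoulli_pmf a;
             return_pmf (if c then lneg (f w) else f w) }
      else
        do { w \<leftarrow> pmf_of_set (nbrs n f v);
             c \<leftarrow> bernoulli_pmf b;
             return_pmf (if c then f w else f v) })"

text \<open>One synchronous round: all vertices updated independently; root fixed at +1.
  Values outside {0..<n} are irrelevant and kept at Bot.\<close>
definition step :: "real \<Rightarrow> real \<Rightarrow> nat \<Rightarrow> nat \<Rightarrow> (nat \<Rightarrow> label) \<Rightarrow> (nat \<Rightarrow> label) pmf" where
  "step a b n r f = Pi_pmf {..<n} Bot
      (\<lambda>v. if v = r then return_pmf Pos else vupdate a b n f v)"

definition init_state :: "nat \<Rightarrow> nat \<Rightarrow> label" where
  "init_state r = (\<lambda>v. if v = r then Pos else Bot)"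

definition converged :: "nat \<Rightarrow> (nat \<Rightarrow> label) \<Rightarrow> bool" where
  "converged n f \<longleftrightarrow> (\<forall>v<n. f v = Pos)"

text \<open>Law of (f_t, [\<exists>s<t. f_s all +1]).\<close>
fun proc :: "real \<Rightarrow> real \<Rightarrow> nat \<Rightarrow> nat \<Rightarrow> nat \<Rightarrow> ((nat \<Rightarrow> label) \<times> bool) pmf" where
  "proc a b n r 0 = return_pmf (init_state r, False)"
| "proc a b n r (Suc t) = proc a b n r t \<bind>
      (\<lambda>(f, h). map_pmf (\<lambda>g. (g, h \<or> converged n f)) (step a b n r f))"

text \<open>Pr[tau_conv \<ge> T] = Pr[f_s not all +1 for every s < T] (tau_conv = \<infinity> allowed).\<close>
definition prob_tau_ge :: "real \<Rightarrow> real \<Rightarrow> nat \<Rightarrow> nat \<Rightarrow> nat \<Rightarrow> real" where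
  "prob_tau_ge a b n r T = measure_pmf.prob (proc a b n r T) {x. \<not> snd x}"

end

theory Submission
  imports Defs
begin

lemma exp_bounded:
  fixes f :: "'b \<Rightarrow> real"
  assumes nn: "\<And>x. 0 \<le> f x" and bd: "\<And>x. f x \<le> B"
  shows "integrable (measure_pmf p) f" "0 \<le> measure_pmf.expectation p f"
        "measure_pmf.expectation p f \<le> B"
proof -
  show i: "integrable (measure_pmf p) f"
    by (rule measure_pmf.integrable_const_bound[where B=B]) (use nn bd in auto)
  show "0 \<le> measure_pmf.expectation p f" using nn by (simp add: integral_nonneg_AE)
  have "measure_pmf.expectation p f \<le> measure_pmf.expectation p (\<lambda>_. B)"
    by (rule integral_mono[OF i]) (use bd in auto)
  then show "measure_pmf.expectation p f \<le> B" by simp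
qed

lemma int_bind:
  fixes f :: "'b \<Rightarrow> real"
  assumes nn: "\<And>x. 0 \<le> f x" and bd: "\<And>x. f x \<le> B"
  shows "measure_pmf.expectation (bind_pmf M N) f
        = measure_pmf.expectation M (\<lambda>x. measure_pmf.expectation (N x) f)"
proof -
  note eb = exp_bounded[OF nn bd]
  have i2: "integrable (measure_pmf M) (\<lambda>x. measure_pmf.expectation (N x) f)"
  proof (rule measure_pmf.integrable_const_bound[where B=B])
    show "AE x in measure_pmf M. norm (measure_pmf.expectation (N x) f) \<le> B"
      using eb(2)[of "N _"] eb(3)[of "N _"] by (auto intro!: AE_I2)
  qed simp
  have "ennreal (measure_pmf.expectation (bind_pmf M N) f) = (\<integral>\<^sup>+x. f x \<partial>bind_pmf M N)"
    by (rule nn_integral_eq_integral[symmetric]) (use eb nn in auto)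
  also have "\<dots> = (\<integral>\<^sup>+x. \<integral>\<^sup>+y. f y \<partial>N x \<partial>M)" by simp
  also have "\<dots> = (\<integral>\<^sup>+x. ennreal (measure_pmf.expectation (N x) f) \<partial>M)"
    by (subst nn_integral_eq_integral) (use eb nn in auto)
  also have "\<dots> = ennreal (measure_pmf.expectation M (\<lambda>x. measure_pmf.expectation (N x) f))"
    by (rule nn_integral_eq_integral[OF i2]) (use eb(2)[of "N _"] in \<open>auto intro!: AE_I2\<close>)
  finally show ?thesis
    by (subst (asm) ennreal_inj) (auto intro!: eb integral_nonneg_AE)
qed

definition ind :: "label \<Rightarrow> real" where "ind l = (if l = Neg then 1 else 0)"

lemma ind_bounds[simp]: "0 \<le> ind l" "ind l \<le> 1"
  by (auto simp: ind_def)

definition Mc :: "nat \<Rightarrow> (nat \<Rightarrow> label) \<Rightarrow> real" where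
  "Mc n f = (\<Sum>v<n. ind (f v))"

lemma finite_nbrs[simp]: "finite (nbrs n f v)"
  unfolding nbrs_def by (rule finite_subset[of _ "{..<n}"]) auto

lemma vneg_lab:
  assumes "f v \<noteq> Bot" "nbrs n f v \<noteq> {}" "0 \<le> b" "b \<le> 1"
  shows "measure_pmf.expectation (vupdate a b n f v) ind
     = b * (\<Sum>u\<in>nbrs n f v. ind (f u)) / card (nbrs n f v) + (1-b) * ind (f v)"
proof -
  have "measure_pmf.expectation (vupdate a b n f v) ind =
     measure_pmf.expectation (pmf_of_set (nbrs n f v)) (\<lambda>w.
       measure_pmf.expectation (bernoulli_pmf b) (\<lambda>c.
         measure_pmf.expectation (return_pmf (if c then f w else f v)) ind))"
    using assms unfolding vupdate_def
    by (simp add: int_bind[where B=1])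
  also have "\<dots> = measure_pmf.expectation (pmf_of_set (nbrs n f v)) (\<lambda>w.
       b * ind (f w) + (1-b) * ind (f v))"
    using assms by (simp add: algebra_simps)
  also have "\<dots> = (\<Sum>w\<in>nbrs n f v. b * ind (f w) + (1-b) * ind (f v)) / card (nbrs n f v)"
    using assms by (simp add: integral_pmf_of_set)
  also have "\<dots> = b * (\<Sum>u\<in>nbrs n f v. ind (f u)) / card (nbrs n f v) + (1-b) * ind (f v)"
  proof -
    have h: "(\<Sum>w\<in>nbrs n f v. b * ind (f w) + (1-b) * ind (f v))
       = b * (\<Sum>u\<in>nbrs n f v. ind (f u)) + card (nbrs n f v) * ((1-b) * ind (f v))"
      by (simp add: sum.distrib sum_distrib_left)
    moreover have "real (card (nbrs n f v)) > 0" using assms by (simp add: card_gt_0_iff)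
    ultimately show ?thesis using assms unfolding h add_divide_distrib by simp
  qed
  finally show ?thesis .
qed

lemma vneg_bot:
  assumes "f v = Bot" "nbrs n f v = {r}" "f r = Pos" "0 \<le> a" "a \<le> 1"
  shows "measure_pmf.expectation (vupdate a b n f v) ind = a"
proof -
  have "measure_pmf.expectation (vupdate a b n f v) ind =
     measure_pmf.expectation (pmf_of_set (nbrs n f v)) (\<lambda>w.
       measure_pmf.expectation (bernoulli_pmf a) (\<lambda>c.
         measure_pmf.expectation (return_pmf (if c then lneg (f w) else f w)) ind))"
    using assms unfolding vupdate_def
    by (simp add: int_bind[where B=1])
  also have "\<dots> = a" using assms by (simp add: ind_def pmf_of_set_singleton)
  finally show ?thesis .
qed

lemma exp_step:
  assumes "r < n"
  shows "measure_pmf.expectation (step a b n r f) (Mc n)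
    = (\<Sum>v<n. measure_pmf.expectation (if v = r then return_pmf Pos else vupdate a b n f v) ind)"
proof -
  have "measure_pmf.expectation (step a b n r f) (Mc n)
     = (\<Sum>v<n. measure_pmf.expectation (step a b n r f) (\<lambda>g. ind (g v)))"
    unfolding Mc_def
    by (subst Bochner_Integration.integral_sum) (auto intro!: exp_bounded(1)[where B=1])
  also have "\<dots> = (\<Sum>v<n. measure_pmf.expectation
      (map_pmf (\<lambda>g. g v) (step a b n r f)) ind)" by simp
  also have "\<dots> = (\<Sum>v<n. measure_pmf.expectation (if v = r then return_pmf Pos else vupdate a b n f v) ind)"
    unfolding step_def by (intro sum.cong refl) (simp add: Pi_pmf_component)
  finally show ?thesis .
qed

lemma vupd_nonbot:
  assumes "r < n" "v \<noteq> r" "f r = Pos" "l \<in> set_pmf (vupdate a b n f v)"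
  shows "l \<noteq> Bot"
proof -
  have rin: "r \<in> nbrs n f v" using assms by (simp add: nbrs_def)
  hence ne: "nbrs n f v \<noteq> {}" by auto
  have nb: "\<And>w. w \<in> nbrs n f v \<Longrightarrow> Bot \<noteq> f w" by (auto simp add: nbrs_def)
  have ln: "\<And>x. (Bot = lneg x) = (Bot = x)" by (case_tac x) auto
  show ?thesis using assms(4) ne nb ln unfolding vupdate_def
    by (auto simp: set_pmf_of_set split: if_splits)
qed

lemma step_support:
  assumes "r < n" "f r = Pos" "g \<in> set_pmf (step a b n r f)"
  shows "g r = Pos" "\<forall>v<n. g v \<noteq> Bot"
proof -
  have g: "g \<in> PiE_dflt {..<n} Bot (set_pmf \<circ> (\<lambda>v. if v = r then return_pmf Pos else vupdate a b n f v))"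
    using assms(3) unfolding step_def by (simp add: set_Pi_pmf)
  show "g r = Pos" using g assms(1) by (auto simp: PiE_dflt_def)
  show "\<forall>v<n. g v \<noteq> Bot"
  proof (intro allI impI)
    fix v assume v: "v < n"
    show "g v \<noteq> Bot"
    proof (cases "v = r")
      case True then show ?thesis using g v by (auto simp: PiE_dflt_def)
    next
      case False
      then have "g v \<in> set_pmf (vupdate a b n f v)" using g v by (auto simp: PiE_dflt_def)
      then show ?thesis using vupd_nonbot assms(1,2) False by metis
    qed
  qed
qed

lemma proc_support:
  assumes "r < n" "x \<in> set_pmf (proc a b n r t)"
  shows "fst x r = Pos \<and> (t \<ge> 1 \<longrightarrow> (\<forall>v<n. fst x v \<noteq> Bot))"
  using assms(2)
proof (induction t arbitrary: x)
  case 0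
  then show ?case by (simp add: init_state_def)
next
  case (Suc t)
  then obtain f h g where "(f,h) \<in> set_pmf (proc a b n r t)" "g \<in> set_pmf (step a b n r f)"
    "x = (g, h \<or> converged n f)"
    by auto
  then show ?case using Suc.IH step_support[OF assms(1)] by fastforce
qed

lemma step_exp_lab:
  assumes "r < n" "2 \<le> n" "f r = Pos" "\<forall>v<n. f v \<noteq> Bot" "0 \<le> b" "b \<le> 1"
  shows "measure_pmf.expectation (step a b n r f) (Mc n) = (1 - b / (real n - 1)) * Mc n f"
proof -
  define m where "m = Mc n f"
  define T where "T v = b * (m - ind (f v)) / (real n - 1) + (1-b) * ind (f v)" for v
  have nb: "\<And>v. v<n \<Longrightarrow> nbrs n f v = {..<n} - {v}" using assms(4) by (auto simp: nbrs_def)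
  have cnb: "\<And>v. v<n \<Longrightarrow> real (card ({..<n} - {v})) = real n - 1"
    using assms(2) by (simp add: of_nat_diff)
  have snb: "\<And>v. v<n \<Longrightarrow> (\<Sum>u\<in>{..<n} - {v}. ind (f u)) = m - ind (f v)"
    unfolding m_def Mc_def by (simp add: sum_diff1)
  have "measure_pmf.expectation (step a b n r f) (Mc n) = (\<Sum>v<n. if v = r then 0 else T v)"
    unfolding exp_step[OF assms(1)]
  proof (rule sum.cong[OF refl])
    fix v assume v: "v \<in> {..<n}"
    show "measure_pmf.expectation (if v = r then return_pmf Pos else vupdate a b n f v) ind
       = (if v = r then 0 else T v)"
    proof (cases "v = r")
      case True then show ?thesis by (simp add: ind_def)
    next
      case False
      have ne: "nbrs n f v \<noteq> {}" using nb[of v] v assms(1) False by auto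
      show ?thesis using False v assms vneg_lab[OF _ ne, of b a] nb[of v] cnb[of v] snb[of v]
        by (simp add: T_def)
    qed
  qed
  also have "\<dots> = (\<Sum>v<n. T v) - T r"
    using assms(1) by (simp add: sum.remove[of "{..<n}" r] )
  also have "(\<Sum>v<n. T v) = b * (real n * m - m) / (real n - 1) + (1-b) * m"
    unfolding T_def by (simp add: sum.distrib sum_divide_distrib[symmetric] sum_distrib_left[symmetric]
        sum_subtractf m_def Mc_def)
  also have "T r = b * m / (real n - 1)" using assms(3) by (simp add: T_def ind_def)
  finally have E: "measure_pmf.expectation (step a b n r f) (Mc n)
     = b * (real n * m - m) / (real n - 1) + (1 - b) * m - b * m / (real n - 1)" .
  have d: "real n - 1 \<noteq> 0" using assms(2) by simp
  have "b * (real n * m - m) / (real n - 1) + (1 - b) * m - b * m / (real n - 1)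
     = (b * (real n * m - m) + (1 - b) * m * (real n - 1) - b * m) / (real n - 1)"
    using d by (simp add: diff_divide_distrib add_divide_distrib)
  also have "\<dots> = ((1 - b / (real n - 1)) * m * (real n - 1)) / (real n - 1)"
  proof -
    have "(1 - b / (real n - 1)) * m * (real n - 1) = m * (real n - 1) - b * m"
      using d by (simp add: left_diff_distrib)
    then show ?thesis by (simp add: algebra_simps)
  qed
  also have "\<dots> = (1 - b / (real n - 1)) * m" using d by simp
  finally show ?thesis using E unfolding m_def by simp
qed

lemma Mc_bounds: "0 \<le> Mc n f" "Mc n f \<le> real n"
proof -
  show "0 \<le> Mc n f" unfolding Mc_def by (rule sum_nonneg) simp
  have "Mc n f \<le> (\<Sum>v<n. (1::real))" unfolding Mc_def by (rule sum_mono) simp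
  then show "Mc n f \<le> real n" by simp
qed

definition Q :: "real \<Rightarrow> real \<Rightarrow> nat \<Rightarrow> nat \<Rightarrow> nat \<Rightarrow> real" where
  "Q a b n r t = measure_pmf.expectation (proc a b n r t)
      (\<lambda>x. if snd x then 0 else Mc n (fst x))"

lemma F_bounds: "0 \<le> (if snd x then 0 else Mc n (fst x))" "(if snd x then 0 else Mc n (fst x)) \<le> real n"
  using Mc_bounds[of n "fst x"] by auto

lemma Q_suc:
  assumes "r < n" "2 \<le> n" "0 \<le> b" "b \<le> 1" "1 \<le> t"
  shows "Q a b n r (Suc t) = (1 - b / (real n - 1)) * Q a b n r t"
proof -
  let ?F = "\<lambda>x. if snd x then 0 else Mc n (fst x)"
  let ?c = "1 - b / (real n - 1)"
  have "Q a b n r (Suc t) = measure_pmf.expectation (proc a b n r t)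
     (\<lambda>x. measure_pmf.expectation ((\<lambda>(f, h). map_pmf (\<lambda>g. (g, h \<or> converged n f)) (step a b n r f)) x) ?F)"
    unfolding Q_def proc.simps by (rule int_bind[where B="real n"]) (rule F_bounds)+
  also have "\<dots> = measure_pmf.expectation (proc a b n r t) (\<lambda>x. ?c * ?F x)"
  proof (rule integral_cong_AE)
    show "AE x in measure_pmf (proc a b n r t).
      measure_pmf.expectation ((\<lambda>(f, h). map_pmf (\<lambda>g. (g, h \<or> converged n f)) (step a b n r f)) x) ?F
      = ?c * ?F x"
    proof (rule AE_pmfI)
      fix x assume x: "x \<in> set_pmf (proc a b n r t)"
      obtain f h where xf: "x = (f, h)" by (cases x)
      have sup: "f r = Pos" "\<forall>v<n. f v \<noteq> Bot" using proc_support[OF assms(1) x] assms(5) xf by auto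
      have cv: "converged n f \<Longrightarrow> Mc n f = 0" unfolding converged_def Mc_def by (simp add: ind_def)
      show "measure_pmf.expectation ((\<lambda>(f, h). map_pmf (\<lambda>g. (g, h \<or> converged n f)) (step a b n r f)) x) ?F
      = ?c * ?F x"
        using step_exp_lab[OF assms(1,2) sup assms(3,4), of a] cv unfolding xf
        by (cases h; cases "converged n f") auto
    qed
  qed simp_all
  also have "\<dots> = ?c * Q a b n r t" unfolding Q_def by simp
  finally show ?thesis .
qed

lemma Q_one:
  assumes "r < n" "2 \<le> n" "0 \<le> a" "a \<le> 1"
  shows "Q a b n r 1 = (real n - 1) * a"
proof -
  have nc: "\<not> converged n (init_state r)"
  proof -
    define v where "v = (if r = 0 then 1 else 0::nat)"
    have "v < n" "v \<noteq> r" using assms(1,2) unfolding v_def by auto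
    then show ?thesis unfolding converged_def init_state_def by auto
  qed
  have "Q a b n r 1 = measure_pmf.expectation (step a b n r (init_state r)) (Mc n)"
    unfolding Q_def One_nat_def proc.simps using nc by (simp add: bind_return_pmf)
  also have "\<dots> = (\<Sum>v<n. if v = r then 0 else a)"
    unfolding exp_step[OF assms(1)]
  proof (rule sum.cong[OF refl])
    fix v assume v: "v \<in> {..<n}"
    show "measure_pmf.expectation (if v = r then return_pmf Pos else vupdate a b n (init_state r) v) ind
      = (if v = r then 0 else a)"
    proof (cases "v = r")
      case True then show ?thesis by (simp add: ind_def)
    next
      case False
      have "nbrs n (init_state r) v = {r}" using assms(1) False
        by (auto simp: nbrs_def init_state_def)
      then show ?thesis using False vneg_bot[of "init_state r" v n r a b] assms
        by (simp add: init_state_def)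
    qed
  qed
  also have "\<dots> = (real n - 1) * a"
  proof -
    have "{..<n} \<inter> - {r} = {..<n} - {r}" by auto
    moreover have "card ({..<n} - {r}) = n - 1" using assms(1) by simp
    ultimately show ?thesis using assms(1,2) by (simp add: sum.If_cases of_nat_diff)
  qed
  finally show ?thesis .
qed

lemma Q_formula:
  assumes "r < n" "2 \<le> n" "0 \<le> a" "a \<le> 1" "0 \<le> b" "b \<le> 1"
  shows "Q a b n r (Suc t) = (real n - 1) * a * (1 - b / (real n - 1)) ^ t"
proof (induction t)
  case 0 then show ?case using Q_one[OF assms(1-4)] by simp
next
  case (Suc t) then show ?case using Q_suc[OF assms(1,2,5,6), of "Suc t" a] by simp
qed

lemma prob_ge_Q:
  assumes "0 < n"
  shows "Q a b n r t \<le> real n * prob_tau_ge a b n r t"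
proof -
  let ?F = "\<lambda>x. if snd x then 0 else Mc n (fst x)"
  have "Q a b n r t \<le> measure_pmf.expectation (proc a b n r t) (\<lambda>x. real n * indicator {x. \<not> snd x} x)"
    unfolding Q_def
  proof (rule integral_mono)
    show "integrable (measure_pmf (proc a b n r t)) ?F"
      by (rule exp_bounded(1)[where B="real n"]) (rule F_bounds)+
    show "integrable (measure_pmf (proc a b n r t)) (\<lambda>x. real n * indicator {x. \<not> snd x} x)"
      by (rule measure_pmf.integrable_const_bound[where B="real n"]) (auto simp: indicator_def)
    fix x show "?F x \<le> real n * indicator {x. \<not> snd x} x"
      using Mc_bounds(2)[of n "fst x"] by (auto simp: indicator_def)
  qed
  also have "\<dots> = real n * prob_tau_ge a b n r t"
    unfolding prob_tau_ge_def by simp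
  finally show ?thesis .
qed

theorem mainTheorem17:
  fixes a b :: real
  assumes "0 < a" "a < 1/2" "0 < b" "b < 1"
  shows "\<exists>c1>0. \<exists>c2>0. \<exists>N. \<forall>n\<ge>N. \<forall>r<n.
           prob_tau_ge a b n r (nat \<lceil>c2 * real n\<rceil>) \<ge> c1 * a"
proof (intro exI[of _ "1/4"] exI[of _ "1/4"] exI[of _ 2] conjI allI impI)
  fix n r :: nat assume n: "2 \<le> n" and r: "r < n"
  define T where "T = nat \<lceil>1/4 * real n\<rceil>"
  have T1: "1 \<le> T" using n unfolding T_def by linarith
  then obtain k where k: "T = Suc k" by (cases T) auto
  have kle: "real k \<le> real n / 4" using k unfolding T_def by linarith
  define c where "c = 1 - b / (real n - 1)"
  have n1: "real n - 1 \<ge> 1" using n by simp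
  have bd: "b / (real n - 1) \<le> 1" using n1 assms by (simp add: divide_le_eq)
  have "1 + real k * (- (b / (real n - 1))) \<le> (1 + - (b / (real n - 1))) ^ k"
    by (rule Bernoulli_inequality) (use bd in simp)
  hence ck: "1 - real k * b / (real n - 1) \<le> c ^ k" unfolding c_def by simp
  have "real k * b \<le> real n / 4" using kle assms
    by (meson less_eq_real_def mult_left_le order_trans of_nat_0_le_iff)
  also have "\<dots> \<le> (real n - 1) / 2" using n by simp
  finally have "real k * b / (real n - 1) \<le> 1/2" using n1 by (simp add: divide_le_eq)
  hence ck2: "1/2 \<le> c ^ k" using ck by simp
  have nn: "1/2 \<le> (real n - 1) / real n" using n by (simp add: field_simps)
  have "1/4 * a \<le> ((real n - 1) / real n) * c ^ k * a"
  proof -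
    have "1/4 \<le> ((real n - 1) / real n) * c ^ k"
      using mult_mono[OF nn ck2] n by simp
    then show ?thesis by (rule mult_right_mono) (use assms in simp)
  qed
  also have "\<dots> = Q a b n r T / real n"
    unfolding k using Q_formula[OF r n, of a b k] assms n unfolding c_def by simp
  also have "\<dots> \<le> prob_tau_ge a b n r T"
    using prob_ge_Q[of n a b r T] n by (simp add: divide_le_eq mult.commute)
  finally show "1/4 * a \<le> prob_tau_ge a b n r (nat \<lceil>1/4 * real n\<rceil>)" unfolding T_def .
qed (simp_all)

end
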